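(* Let $n\in\{1,2,3\}$, let $\Omega\subset\mathbb{R}^n$ be an unbounded Lebesgue measurable set, let $e:\Omega\to\mathbb{C}$ be a bounded measurable function, and set $B_N=\Omega\cap\{x\in\mathbb{R}^n:|x|\le N\}$. Assume there are functions $d(N)$ (not depending on $\lambda$) and $g(\lambda)$ such that for every $\lambda\in\mathbb{C}\setminus[0,\infty)$, \[ \int_{B_N}\frac{|e(x)|^2}{|x|^2-\lambda}\,d^nx=d(N)+g(\lambda)+o\big(N^{\lfloor n/2\rfloor-1}\big)\qquad (N\to\infty). \] Put $a_n=\frac{g(i)-g(-i)}{2i}$, $b_n=\frac{g(i)+g(-i)}{2}$. Let $\theta\in(0,2\pi)$, $\alpha=\cot(\theta/2)$, and let $Q_\alpha$ be the operator defined in the context. Then for every $\lambda\in\rho(Q_\alpha)\cap\rho(Q_0)$ and every $\phi\in L^2(\Omega)$, \[ R(\lambda,Q_\alpha)\phi=R(\lambda,Q_0)\phi+\frac{1}{\frac{a_n}{\alpha}+b_n-g(\lambda)}\left(\int_{\Omega}\bar e(x)\,\frac{\phi(x)}{\lambda-|x|^2}\,d^nx\right)\psi_\lambda ,\qquad \psi_\lambda(x)=\frac{e(x)}{|x|^2-\lambda}. \] Moreover $R(\lambda,Q_\alpha)-R(\lambda,Q_0)$ is a trace class operator.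
   Context: $R(\lambda,T)=(\lambda I-T)^{-1}$ and $\rho(T)$ is the resolvent set. $Q_0$ is the maximal multiplication operator in $L^2(\Omega)$: $\mathrm{dom}(Q_0)=\{f\in L^2(\Omega): |x|^2f\in L^2(\Omega)\}$, $(Q_0f)(x)=|x|^2f(x)$. $\dot Q$ is its restriction to $\{f\in\mathrm{dom}(Q_0):\int_\Omega \bar e(x)f(x)\,d^nx=0\}$ (closure taken). For $\lambda\notin[0,\infty)$, $\psi_\lambda(x)=e(x)/(|x|^2-\lambda)$. For $\theta\in(0,2\pi)$ and $\alpha=\cot(\theta/2)$, $Q_\alpha$ is the operator with domain $\{h+c(\psi_i+e^{i\theta}\psi_{-i}): h\in\mathrm{dom}(\dot Q),\,c\in\mathbb{C}\}$ acting by $Q_\alpha(h+c(\psi_i+e^{i\theta}\psi_{-i}))=|x|^2h+c(i\psi_i-ie^{i\theta}\psi_{-i})$ (the von Neumann self-adjoint extensions of $\dot Q$); $\theta=\pi$, i.e. $\alpha=0$, gives $Q_0$, and for $\alpha=0$ the fraction $1/(a_n/\alpha+b_n-g(\lambda))$ is interpreted as $0$. *)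

theory Defs
  imports "HOL-Analysis.Analysis" "HOL-Library.Landau_Symbols"
begin

text \<open>Concrete model of L2(Omega) for Omega a subset of R^n (n = CARD('n)):
  elements are represented by measurable functions, identified up to
  equality almost everywhere on Omega.\<close>

definition L2 :: "(real^'n) set \<Rightarrow> (real^'n \<Rightarrow> complex) set" where
  "L2 \<Omega> = {f. set_borel_measurable lebesgue \<Omega> f \<and>
                 set_integrable lebesgue \<Omega> (\<lambda>x. (cmod (f x))^2)}"

definition l2norm :: "(real^'n) set \<Rightarrow> (real^'n \<Rightarrow> complex) \<Rightarrow> real" where
  "l2norm \<Omega> f = sqrt (LINT x:\<Omega>|lebesgue. (cmod (f x))^2)"

definition l2inner :: "(real^'n) set \<Rightarrow> (real^'n \<Rightarrow> complex) \<Rightarrow> (real^'n \<Rightarrow> complex) \<Rightarrow> complex" where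
  "l2inner \<Omega> f g = (LINT x:\<Omega>|lebesgue. f x * cnj (g x))"

definition aeq :: "(real^'n) set \<Rightarrow> (real^'n \<Rightarrow> complex) \<Rightarrow> (real^'n \<Rightarrow> complex) \<Rightarrow> bool" where
  "aeq \<Omega> f g \<longleftrightarrow> (AE x in lebesgue. x \<in> \<Omega> \<longrightarrow> f x = g x)"

text \<open>Operators in L2(Omega) are represented by their graphs (sets of pairs).\<close>

definition Q0 :: "(real^'n) set \<Rightarrow> ((real^'n \<Rightarrow> complex) \<times> (real^'n \<Rightarrow> complex)) set" where
  "Q0 \<Omega> = {(f, g). f \<in> L2 \<Omega> \<and> g \<in> L2 \<Omega> \<and>
              aeq \<Omega> g (\<lambda>x. complex_of_real ((norm x)^2) * f x)}"

definition Qdot_pre :: "(real^'n) set \<Rightarrow> (real^'n \<Rightarrow> complex) \<Rightarrow>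
    ((real^'n \<Rightarrow> complex) \<times> (real^'n \<Rightarrow> complex)) set" where
  "Qdot_pre \<Omega> e = {(f, g). (f, g) \<in> Q0 \<Omega> \<and> (LINT x:\<Omega>|lebesgue. cnj (e x) * f x) = 0}"

definition graph_closure :: "(real^'n) set \<Rightarrow> ((real^'n \<Rightarrow> complex) \<times> (real^'n \<Rightarrow> complex)) set \<Rightarrow>
    ((real^'n \<Rightarrow> complex) \<times> (real^'n \<Rightarrow> complex)) set" where
  "graph_closure \<Omega> G = {(f, g). f \<in> L2 \<Omega> \<and> g \<in> L2 \<Omega> \<and>
     (\<exists>F H. (\<forall>k. (F k, H k) \<in> G) \<and>
        (\<lambda>k. l2norm \<Omega> (\<lambda>x. F k x - f x)) \<longlonglongrightarrow> 0 \<and>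
        (\<lambda>k. l2norm \<Omega> (\<lambda>x. H k x - g x)) \<longlonglongrightarrow> 0)}"

definition Qdot :: "(real^'n) set \<Rightarrow> (real^'n \<Rightarrow> complex) \<Rightarrow>
    ((real^'n \<Rightarrow> complex) \<times> (real^'n \<Rightarrow> complex)) set" where
  "Qdot \<Omega> e = graph_closure \<Omega> (Qdot_pre \<Omega> e)"

definition psi :: "(real^'n \<Rightarrow> complex) \<Rightarrow> complex \<Rightarrow> real^'n \<Rightarrow> complex" where
  "psi e l = (\<lambda>x. e x / (complex_of_real ((norm x)^2) - l))"

text \<open>Von Neumann self-adjoint extension Q_alpha, alpha = cot(theta/2).\<close>
definition Qalpha :: "(real^'n) set \<Rightarrow> (real^'n \<Rightarrow> complex) \<Rightarrow> real \<Rightarrow>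
    ((real^'n \<Rightarrow> complex) \<times> (real^'n \<Rightarrow> complex)) set" where
  "Qalpha \<Omega> e \<theta> = {(f, g). f \<in> L2 \<Omega> \<and> g \<in> L2 \<Omega> \<and>
     (\<exists>h k c. (h, k) \<in> Qdot \<Omega> e \<and>
        aeq \<Omega> f (\<lambda>x. h x + c * (psi e \<i> x + exp (\<i> * of_real \<theta>) * psi e (- \<i>) x)) \<and>
        aeq \<Omega> g (\<lambda>x. k x + c * (\<i> * psi e \<i> x - \<i> * exp (\<i> * of_real \<theta>) * psi e (- \<i>) x)))}"

text \<open>R is (a representative of) the resolvent R(l,T) = (l I - T)^-1:
  l I - T is injective, every phi in L2 has preimage R phi, and R is bounded.\<close>
definition is_resolvent :: "(real^'n) set \<Rightarrow> ((real^'n \<Rightarrow> complex) \<times> (real^'n \<Rightarrow> complex)) set \<Rightarrow>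
    complex \<Rightarrow> ((real^'n \<Rightarrow> complex) \<Rightarrow> (real^'n \<Rightarrow> complex)) \<Rightarrow> bool" where
  "is_resolvent \<Omega> T l R \<longleftrightarrow>
     (\<forall>\<phi> \<in> L2 \<Omega>. R \<phi> \<in> L2 \<Omega> \<and> (R \<phi>, \<lambda>x. l * R \<phi> x - \<phi> x) \<in> T) \<and>
     (\<forall>f g. (f, g) \<in> T \<longrightarrow> aeq \<Omega> (\<lambda>x. l * f x - g x) (\<lambda>x. 0) \<longrightarrow> aeq \<Omega> f (\<lambda>x. 0)) \<and>
     (\<exists>C. \<forall>\<phi> \<in> L2 \<Omega>. l2norm \<Omega> (R \<phi>) \<le> C * l2norm \<Omega> \<phi>)"

definition resolvent_set :: "(real^'n) set \<Rightarrow> ((real^'n \<Rightarrow> complex) \<times> (real^'n \<Rightarrow> complex)) set \<Rightarrow>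
    complex set" where
  "resolvent_set \<Omega> T = {l. \<exists>R. is_resolvent \<Omega> T l R}"

definition trace_class :: "(real^'n) set \<Rightarrow> ((real^'n \<Rightarrow> complex) \<Rightarrow> (real^'n \<Rightarrow> complex)) \<Rightarrow> bool" where
  "trace_class \<Omega> T \<longleftrightarrow>
     (\<exists>u v. (\<forall>k::nat. u k \<in> L2 \<Omega> \<and> v k \<in> L2 \<Omega>) \<and>
        summable (\<lambda>k. l2norm \<Omega> (u k) * l2norm \<Omega> (v k)) \<and>
        (\<forall>\<phi> \<in> L2 \<Omega>. (\<lambda>m. l2norm \<Omega> (\<lambda>x. T \<phi> x - (\<Sum>k<m. l2inner \<Omega> \<phi> (v k) * u k x))) \<longlonglongrightarrow> 0))"

end

theory Submission
  imports Defs
begin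


lemma w_pointwise:
  fixes x :: "'a::real_normed_vector"
  shows "ennreal (1 / (1 + (norm x)^2)^2) \<le> (\<Sum>k. ennreal ((1/16)^k) * indicator (cball 0 (2^(k+1))) x)"
proof -
  obtain n::nat where n: "norm x \<le> 2^(n+1)"
  proof -
    obtain n where "norm x < 2^n" using real_arch_pow[of 2 "norm x"] by auto
    moreover have "(2::real)^n \<le> 2^(n+1)" by simp
    ultimately show ?thesis using that[of n] by linarith
  qed
  define P where "P k \<longleftrightarrow> norm x \<le> 2^(k+1)" for k::nat
  have "\<exists>k. P k \<and> (k = 0 \<or> (\<exists>j. k = Suc j \<and> \<not> P j))"
  proof (cases "P 0")
    case True then show ?thesis by auto
  next
    case False
    from ex_least_nat_le[of P n] n obtain k where "k \<le> n" "\<forall>i<k. \<not> P i" "P k"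
      unfolding P_def by auto
    moreover have "k \<noteq> 0" using False \<open>P k\<close> by (cases k) auto
    ultimately show ?thesis by (metis lessI not0_implies_Suc)
  qed
  then obtain k where Pk: "P k" and k0: "k = 0 \<or> (\<exists>j. k = Suc j \<and> \<not> P j)" by auto
  have le: "1 / (1 + (norm x)^2)^2 \<le> (1/16::real)^k"
  proof (cases "k = 0")
    case True then show ?thesis by (simp add: divide_le_eq_1 )
  next
    case False
    then obtain j where j: "k = Suc j" "\<not> P j" using k0 by auto
    then have "(2::real)^(j+1) < norm x" unfolding P_def by auto
    then have "((2::real)^(j+1))^4 < (norm x)^4"
      by (intro power_strict_mono) auto
    also have "\<dots> \<le> (1 + (norm x)^2)^2" by (simp add: power2_eq_square power4_eq_xxxx algebra_simps)
    finally have A: "((2::real)^(j+1))^4 < (1 + (norm x)^2)^2" .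
    have B: "((2::real)^(j+1))^4 = 16^k"
    proof -
      have "((2::real)^(j+1))^4 = (2^4)^(j+1)" by (metis mult.commute power_mult)
      then show ?thesis using j(1) by simp
    qed
    have "1 / (1 + (norm x)^2)^2 \<le> 1 / 16^k"
      by (rule divide_left_mono) (use A B in \<open>auto intro!: mult_pos_pos\<close>)
    then show ?thesis by (simp add: power_one_over)
  qed
  have "ennreal (1 / (1 + (norm x)^2)^2) \<le> ennreal ((1/16)^k) * indicator (cball 0 (2^(k+1))) x"
    using le Pk unfolding P_def by (simp add: indicator_def)
  also have "\<dots> \<le> (\<Sum>k. ennreal ((1/16)^k) * indicator (cball 0 (2^(k+1))) x)"
  proof (rule ccontr)
    let ?f = "\<lambda>k. ennreal ((1/16)^k) * indicator (cball 0 (2^(k+1))) x"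
    assume "\<not> ?f k \<le> suminf ?f"
    then have "suminf ?f < ?f k" by (simp add: not_le)
    from ennreal_suminf_lessD[OF this, of k] show False by simp
  qed
  finally show ?thesis .
qed
lemma w_integrable_lborel:
  assumes "CARD('n) \<le> 3"
  shows "integrable lborel (\<lambda>x::real^'n. 1 / (1 + (norm x)^2)^2)"
proof (rule integrableI_nonneg)
  show "(\<lambda>x::real^'n. 1 / (1 + (norm x)^2)^2) \<in> borel_measurable lborel" by measurable
  show "AE x in lborel. 0 \<le> 1 / (1 + (norm (x::real^'n))^2)^2" by simp
  define V where "V = unit_ball_vol (real CARD('n))"
  have V0: "0 \<le> V" unfolding V_def by simp
  have trm: "(1/16::real)^k * (V * (2^(k+1))^CARD('n)) \<le> 8 * V * (1/2)^k" for k::nat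
  proof -
    have "(2::real)^(k+1) \<ge> 1" using one_le_power[of "2::real" "k+1"] by simp
    then have "((2::real)^(k+1))^CARD('n) \<le> (2^(k+1))^3" using assms by (intro power_increasing) auto
    also have "\<dots> = 8 * 8^k"
    proof -
      have "((2::real)^(k+1))^3 = (2^3)^(k+1)" by (metis mult.commute power_mult)
      then show ?thesis by simp
    qed
    finally have "(1/16::real)^k * (V * (2^(k+1))^CARD('n)) \<le> (1/16)^k * (V * (8 * 8^k))"
      using V0 by (intro mult_left_mono) auto
    also have "\<dots> = 8 * V * ((1/16)^k * 8^k)" by simp
    also have "(1/16::real)^k * 8^k = (1/2)^k" by (simp add: power_mult_distrib[symmetric])
    finally show ?thesis by simp
  qed
  have "(\<integral>\<^sup>+x. ennreal (1 / (1 + (norm (x::real^'n))^2)^2) \<partial>lborel)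
      \<le> (\<integral>\<^sup>+x. (\<Sum>k. ennreal ((1/16)^k) * indicator (cball (0::real^'n) (2^(k+1))) x) \<partial>lborel)"
    apply (rule nn_integral_mono) using w_pointwise by blast
  also have "\<dots> = (\<Sum>k. \<integral>\<^sup>+x. ennreal ((1/16)^k) * indicator (cball (0::real^'n) (2^(k+1))) x \<partial>lborel)"
    by (rule nn_integral_suminf) (intro borel_measurable_times_ennreal borel_measurable_const borel_measurable_indicator borel_closed closed_cball, simp)
  also have "\<dots> = (\<Sum>k. ennreal ((1/16)^k) * emeasure lborel (cball (0::real^'n) (2^(k+1))))"
    by (simp add: nn_integral_cmult_indicator)
  also have "\<dots> = (\<Sum>k. ennreal ((1/16)^k * (V * (2^(k+1))^CARD('n))))"
    by (simp add: emeasure_cball V_def ennreal_mult)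
  also have "\<dots> \<le> (\<Sum>k. ennreal (8 * V * (1/2)^k))"
    by (intro suminf_le summableI ennreal_leI trm)
  also have "\<dots> = ennreal (\<Sum>k. 8 * V * (1/2)^k)"
    using V0 by (intro suminf_ennreal2 summable_mult summable_geometric) auto
  also have "\<dots> < \<infinity>" by simp
  finally show "(\<integral>\<^sup>+x. ennreal (1 / (1 + (norm (x::real^'n))^2)^2) \<partial>lborel) < \<infinity>" .
qed


lemma offray_ne:
  assumes "l \<notin> complex_of_real ` {0..}" "s \<ge> 0"
  shows "complex_of_real s - l \<noteq> 0"
  using assms by auto

lemma offray_bound:
  assumes "l \<notin> complex_of_real ` {0..}"
  shows "\<exists>c>0. \<forall>s\<ge>0. c * (1 + s) \<le> cmod (complex_of_real s - l)"
proof (cases "Im l = 0")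
  case True
  then have "l = complex_of_real (Re l)" by (simp add: complex_eq_iff)
  then have "Re l < 0" using assms by (metis atLeast_iff image_eqI linorder_not_le)
  define c where "c = min 1 (- Re l)"
  have "c > 0" using \<open>Re l < 0\<close> unfolding c_def by auto
  moreover have "c * (1 + s) \<le> cmod (complex_of_real s - l)" if "s \<ge> 0" for s
  proof -
    have "cmod (complex_of_real s - l) \<ge> \<bar>Re (complex_of_real s - l)\<bar>" by (rule abs_Re_le_cmod)
    moreover have "Re (complex_of_real s - l) = s - Re l" by simp
    moreover have "c * (1 + s) \<le> s - Re l"
    proof -
      have "c * (1 + s) = c + c * s" by (simp add: algebra_simps)
      also have "c * s \<le> 1 * s" using that unfolding c_def by (intro mult_right_mono) auto
      finally show ?thesis unfolding c_def by linarith
    qed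
    ultimately show ?thesis by linarith
  qed
  ultimately show ?thesis by blast
next
  case False
  define y where "y = \<bar>Im l\<bar>"
  define R where "R = cmod l"
  have y: "y > 0" using False unfolding y_def by auto
  have R: "R \<ge> 0" unfolding R_def by simp
  define c where "c = min (1/2) (y / (2*R + 2))"
  have "c > 0" using y R unfolding c_def by auto
  moreover have "c * (1 + s) \<le> cmod (complex_of_real s - l)" if s: "s \<ge> 0" for s
  proof (cases "s \<ge> 2*R + 1")
    case True
    have "cmod (complex_of_real s - l) \<ge> cmod (complex_of_real s) - cmod l" by (rule norm_triangle_ineq2)
    then have a: "cmod (complex_of_real s - l) \<ge> s - R" using s unfolding R_def by simp
    have "c \<le> 1/2" unfolding c_def by (rule min.cobounded1)
    then have b: "c * (1 + s) \<le> (1/2) * (1 + s)" using s by (intro mult_right_mono) auto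
    have b': "(1/2) * (1 + s) = 1/2 + s/2" by simp
    show ?thesis using True a b b' by linarith
  next
    case False
    have "cmod (complex_of_real s - l) \<ge> \<bar>Im (complex_of_real s - l)\<bar>" by (rule abs_Im_le_cmod)
    then have a: "cmod (complex_of_real s - l) \<ge> y" unfolding y_def by simp
    have "c \<le> y / (2*R + 2)" unfolding c_def by (rule min.cobounded2)
    then have b: "c * (1 + s) \<le> (y / (2*R + 2)) * (1 + s)" using s by (intro mult_right_mono) auto
    have d: "(y / (2*R + 2)) * (1 + s) \<le> y"
    proof -
      have "(1 + s) \<le> 2*R + 2" using False by linarith
      then have "(y / (2*R + 2)) * (1 + s) \<le> (y / (2*R + 2)) * (2*R+2)" using y R
        by (intro mult_left_mono) auto
      also have "\<dots> = y" using R by simp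
      finally show ?thesis .
    qed
    show ?thesis using a b d by linarith
  qed
  ultimately show ?thesis by blast
qed

lemma psi_bound:
  assumes "l \<notin> complex_of_real ` {0..}" "c > 0" "\<forall>s\<ge>0. c * (1 + s) \<le> cmod (complex_of_real s - l)"
  shows "cmod (psi e l x) \<le> cmod (e x) / (c * (1 + (norm x)^2))"
proof -
  have p: "c * (1 + (norm x)^2) > 0" using assms by (auto intro!: mult_pos_pos add_pos_nonneg)
  have "cmod (psi e l x) = cmod (e x) / cmod (complex_of_real ((norm x)^2) - l)"
    unfolding psi_def by (simp add: norm_divide)
  also have "\<dots> \<le> cmod (e x) / (c * (1 + (norm x)^2))"
  proof -
    have d: "c * (1 + (norm x)^2) \<le> cmod (complex_of_real ((norm x)^2) - l)"
      using assms(3) by (metis zero_le_power2)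
    have "0 < cmod (complex_of_real ((norm x)^2) - l) * (c * (1 + (norm x)^2))"
      using d p assms(2) by (intro mult_pos_pos) (auto intro!: add_pos_nonneg)
    then show ?thesis using d by (intro divide_left_mono) auto
  qed
  finally show ?thesis .
qed

lemma borel_measurable_cnj'[measurable (raw)]:
  "f \<in> borel_measurable M \<Longrightarrow> (\<lambda>x. cnj (f x)) \<in> borel_measurable M"
  by (rule borel_measurable_continuous_on[where f=cnj]) (auto intro: continuous_intros)

lemma w_meas: "(\<lambda>x::real^'n. 1 / (1 + (norm x)^2)^2) \<in> borel_measurable lborel" by measurable

locale P29 =
  fixes \<Omega> :: "(real^'n) set" and e :: "real^'n \<Rightarrow> complex" and M :: real
  assumes card: "CARD('n) \<le> 3" and \<Omega>m: "\<Omega> \<in> sets lebesgue"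
    and em: "set_borel_measurable lebesgue \<Omega> e" and eb: "\<forall>x\<in>\<Omega>. cmod (e x) \<le> M"
begin

abbreviation "N \<equiv> restrict_space lebesgue \<Omega>"

lemma idm[measurable]: "(\<lambda>x. x) \<in> borel_measurable N"
  by (intro measurable_restrict_space1 measurable_completion) simp

lemma em'[measurable]: "e \<in> borel_measurable N"
  using em \<Omega>m unfolding set_borel_measurable_def by (simp add: borel_measurable_restrict_space_iff)

lemma spN[simp]: "space N = \<Omega>"
  using \<Omega>m by simp

lemma L2_iff: "f \<in> L2 \<Omega> \<longleftrightarrow> f \<in> borel_measurable N \<and> integrable N (\<lambda>x. (cmod (f x))^2)"
  unfolding L2_def set_borel_measurable_def set_integrable_def
  using \<Omega>m by (simp add: borel_measurable_restrict_space_iff integrable_restrict_space)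

lemma aeq_iff: "aeq \<Omega> f g \<longleftrightarrow> (AE x in N. f x = g x)"
  unfolding aeq_def using \<Omega>m by (simp add: AE_restrict_space_iff)

lemma sint:
  fixes f :: "real^'n \<Rightarrow> 'b::{banach,second_countable_topology}"
  shows "(LINT x:\<Omega>|lebesgue. f x) = integral\<^sup>L N f"
  unfolding set_lebesgue_integral_def using \<Omega>m integral_restrict_space[of \<Omega> lebesgue f] by simp

lemma wN: "integrable N (\<lambda>x. 1 / (1 + (norm x)^2)^2)"
proof -
  have "integrable lborel (\<lambda>x::real^'n. 1 / (1 + (norm x)^2)^2)" using card by (rule w_integrable_lborel)
  moreover have m: "(\<lambda>x::real^'n. 1 / (1 + (norm x)^2)^2) \<in> borel_measurable lborel" by (rule w_meas)
  ultimately have "integrable lebesgue (\<lambda>x::real^'n. 1 / (1 + (norm x)^2)^2)"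
    using integrable_completion[OF m] by blast
  then have "integrable lebesgue (\<lambda>x::real^'n. indicator \<Omega> x *\<^sub>R (1 / (1 + (norm x)^2)^2))"
    by (rule integrable_mult_indicator[OF \<Omega>m])
  moreover have "integrable N (\<lambda>x::real^'n. 1 / (1 + (norm x)^2)^2) \<longleftrightarrow>
     integrable lebesgue (\<lambda>x::real^'n. indicator \<Omega> x *\<^sub>R (1 / (1 + (norm x)^2)^2))"
    by (rule integrable_restrict_space) (simp add: \<Omega>m)
  ultimately show ?thesis by blast
qed

lemma M0: "x \<in> \<Omega> \<Longrightarrow> 0 \<le> M" using eb norm_ge_zero order_trans by blast

lemma L2_add: "f \<in> L2 \<Omega> \<Longrightarrow> g \<in> L2 \<Omega> \<Longrightarrow> (\<lambda>x. f x + g x) \<in> L2 \<Omega>"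
  unfolding L2_iff
proof (elim conjE, intro conjI)
  assume [measurable]: "f \<in> borel_measurable N" "g \<in> borel_measurable N"
    and i: "integrable N (\<lambda>x. (cmod (f x))\<^sup>2)" "integrable N (\<lambda>x. (cmod (g x))\<^sup>2)"
  show "(\<lambda>x. f x + g x) \<in> borel_measurable N" by measurable
  show "integrable N (\<lambda>x. (cmod (f x + g x))\<^sup>2)"
  proof (rule Bochner_Integration.integrable_bound[where f="\<lambda>x. 2 * (cmod (f x))\<^sup>2 + 2 * (cmod (g x))\<^sup>2"])
    show "integrable N (\<lambda>x. 2 * (cmod (f x))\<^sup>2 + 2 * (cmod (g x))\<^sup>2)" using i by auto
    show "(\<lambda>x. (cmod (f x + g x))\<^sup>2) \<in> borel_measurable N" by measurable
    show "AE x in N. norm ((cmod (f x + g x))\<^sup>2) \<le> norm (2 * (cmod (f x))\<^sup>2 + 2 * (cmod (g x))\<^sup>2)"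
    proof (intro AE_I2)
      fix x
      have "cmod (f x + g x) \<le> cmod (f x) + cmod (g x)" by (rule norm_triangle_ineq)
      then have "(cmod (f x + g x))^2 \<le> (cmod (f x) + cmod (g x))^2" by (intro power_mono) auto
      also have "\<dots> \<le> 2 * (cmod (f x))\<^sup>2 + 2 * (cmod (g x))\<^sup>2"
        using zero_le_power2[of "cmod (f x) - cmod (g x)"] unfolding power2_sum power2_diff by linarith
      finally show "norm ((cmod (f x + g x))\<^sup>2) \<le> norm (2 * (cmod (f x))\<^sup>2 + 2 * (cmod (g x))\<^sup>2)" by simp
    qed
  qed
qed

lemma L2_cmult: "f \<in> L2 \<Omega> \<Longrightarrow> (\<lambda>x. a * f x) \<in> L2 \<Omega>"
  unfolding L2_iff
proof (elim conjE, intro conjI)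
  assume [measurable]: "f \<in> borel_measurable N" and i: "integrable N (\<lambda>x. (cmod (f x))\<^sup>2)"
  show "(\<lambda>x. a * f x) \<in> borel_measurable N" by measurable
  have "integrable N (\<lambda>x. (cmod a)^2 * (cmod (f x))\<^sup>2)" using i by auto
  then show "integrable N (\<lambda>x. (cmod (a * f x))\<^sup>2)" by (simp add: norm_mult power_mult_distrib)
qed

lemma L2_zero: "(\<lambda>x. 0) \<in> L2 \<Omega>"
  unfolding L2_iff by simp

lemma L2_diff: "f \<in> L2 \<Omega> \<Longrightarrow> g \<in> L2 \<Omega> \<Longrightarrow> (\<lambda>x. f x - g x) \<in> L2 \<Omega>"
  using L2_add[OF _ L2_cmult[of g "-1"], of f] by simp

lemma L2_meas: "f \<in> L2 \<Omega> \<Longrightarrow> f \<in> borel_measurable N"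
  unfolding L2_iff by simp

lemma psi_L2:
  assumes l: "l \<notin> complex_of_real ` {0..}"
  shows "psi e l \<in> L2 \<Omega>"
  unfolding L2_iff
proof
  show "psi e l \<in> borel_measurable N" unfolding psi_def by measurable
  obtain c where c: "c > 0" "\<forall>s\<ge>0. c * (1 + s) \<le> cmod (complex_of_real s - l)"
    using offray_bound[OF l] by blast
  show "integrable N (\<lambda>x. (cmod (psi e l x))\<^sup>2)"
  proof (rule Bochner_Integration.integrable_bound[where f="\<lambda>x. (M / c)^2 * (1 / (1 + (norm x)^2)^2)"])
    show "integrable N (\<lambda>x. (M / c)^2 * (1 / (1 + (norm x)^2)^2))" by (intro integrable_mult_right) (rule wN)
    show "(\<lambda>x. (cmod (psi e l x))\<^sup>2) \<in> borel_measurable N" unfolding psi_def by measurable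
    show "AE x in N. norm ((cmod (psi e l x))\<^sup>2) \<le> norm ((M / c)^2 * (1 / (1 + (norm x)^2)^2))"
    proof (intro AE_I2)
      fix x assume x: "x \<in> space N"
      have p: "c * (1 + (norm x)^2) > 0" using c by (intro mult_pos_pos add_pos_nonneg) auto
      have "cmod (psi e l x) \<le> cmod (e x) / (c * (1 + (norm x)^2))" by (rule psi_bound[OF l c])
      also have "\<dots> \<le> M / (c * (1 + (norm x)^2))" using eb x p by (intro divide_right_mono) auto
      finally have "(cmod (psi e l x))^2 \<le> (M / (c * (1 + (norm x)^2)))^2" by (intro power_mono) auto
      also have "\<dots> = (M / c)^2 * (1 / (1 + (norm x)^2)^2)" by (simp add: power_divide power_mult_distrib)
      finally show "norm ((cmod (psi e l x))\<^sup>2) \<le> norm ((M / c)^2 * (1 / (1 + (norm x)^2)^2))" by simp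
    qed
  qed
qed

end


context P29 begin

lemma Q0D:
  assumes "(r, q) \<in> Q0 \<Omega>"
  shows "r \<in> L2 \<Omega>" "q \<in> L2 \<Omega>" "AE x in N. q x = complex_of_real ((norm x)^2) * r x"
  using assms unfolding Q0_def aeq_iff by auto

lemma eQ0_int:
  assumes "(r, q) \<in> Q0 \<Omega>"
  shows "integrable N (\<lambda>x. cnj (e x) * r x)"
proof -
  note Q = Q0D[OF assms]
  have [measurable]: "r \<in> borel_measurable N" using Q(1) by (rule L2_meas)
  have ir: "integrable N (\<lambda>x. (cmod (r x))^2)" "integrable N (\<lambda>x. (cmod (q x))^2)"
    using Q(1,2) unfolding L2_iff by auto
  show ?thesis
  proof (rule Bochner_Integration.integrable_bound[where f="\<lambda>x. \<bar>M\<bar> * ((cmod (r x))^2 + (cmod (q x))^2 + (1 / (1 + (norm x)^2)^2) / 2)"])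
    show "integrable N (\<lambda>x. \<bar>M\<bar> * ((cmod (r x))^2 + (cmod (q x))^2 + (1 / (1 + (norm x)^2)^2) / 2))"
      by (intro Bochner_Integration.integrable_mult_right Bochner_Integration.integrable_add integrable_divide ir wN)
    show "(\<lambda>x. cnj (e x) * r x) \<in> borel_measurable N" by measurable
    show "AE x in N. norm (cnj (e x) * r x) \<le> norm (\<bar>M\<bar> * ((cmod (r x))^2 + (cmod (q x))^2 + (1 / (1 + (norm x)^2)^2) / 2))"
      using Q(3) AE_space
    proof eventually_elim
      case (elim x)
      define a where "a = cmod (r x)"
      define s where "s = (norm x)^2"
      define b where "b = cmod (q x)"
      have s0: "s \<ge> 0" unfolding s_def by simp
      have a0: "a \<ge> 0" unfolding a_def by simp
      have b: "b = s * a" unfolding a_def b_def s_def using elim(1)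
        by (simp only: norm_mult norm_of_real) simp
      define t where "t = 1 + s"
      have t: "t > 0" unfolding t_def using s0 by simp
      have "2 * a = 2 * (t * a) * (1 / t)" using t by simp
      also have "\<dots> \<le> (t * a)^2 + (1 / t)^2"
        using zero_le_power2[of "t * a - 1 / t"] unfolding power2_diff by linarith
      also have "(t * a)^2 = (a + b)^2" unfolding t_def b by (simp add: algebra_simps)
      also have "\<dots> \<le> 2 * a^2 + 2 * b^2"
        using zero_le_power2[of "a - b"] unfolding power2_sum power2_diff by linarith
      finally have key: "a \<le> a^2 + b^2 + (1 / t)^2 / 2" by simp
      have eM: "cmod (e x) \<le> \<bar>M\<bar>" using eb elim(2) by force
      have "norm (cnj (e x) * r x) = cmod (e x) * a" unfolding a_def by (simp add: norm_mult)
      also have "\<dots> \<le> \<bar>M\<bar> * a" using eM a0 by (intro mult_right_mono) auto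
      also have "\<dots> \<le> \<bar>M\<bar> * (a^2 + b^2 + (1 / t)^2 / 2)" using key by (intro mult_left_mono) auto
      also have "(1 / t)^2 = 1 / (1 + (norm x)^2)^2" unfolding t_def s_def by (simp add: power_one_over)
      finally show ?case unfolding a_def b_def by simp
    qed
  qed
qed

lemma Q0_diff:
  assumes "(a, b) \<in> Q0 \<Omega>" "(c, d) \<in> Q0 \<Omega>"
  shows "(\<lambda>x. a x - c x, \<lambda>x. b x - d x) \<in> Q0 \<Omega>"
proof -
  note A = Q0D[OF assms(1)] and C = Q0D[OF assms(2)]
  have "AE x in N. b x - d x = complex_of_real ((norm x)^2) * (a x - c x)"
    using A(3) C(3) by eventually_elim (simp add: algebra_simps)
  then show ?thesis using A C unfolding Q0_def aeq_iff by (auto intro: L2_diff)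
qed

lemma Qpre_Qdot: "(h, k) \<in> Qdot_pre \<Omega> e \<Longrightarrow> (h, k) \<in> Qdot \<Omega> e"
  unfolding Qdot_def graph_closure_def
proof (clarsimp, intro conjI)
  assume a: "(h, k) \<in> Qdot_pre \<Omega> e"
  then show "h \<in> L2 \<Omega>" "k \<in> L2 \<Omega>" unfolding Qdot_pre_def Q0_def by auto
  show "\<exists>F H. (\<forall>k. (F k, H k) \<in> Qdot_pre \<Omega> e) \<and> (\<lambda>k. l2norm \<Omega> (\<lambda>x. F k x - h x)) \<longlonglongrightarrow> 0 \<and>
          (\<lambda>ka. l2norm \<Omega> (\<lambda>x. H ka x - k x)) \<longlonglongrightarrow> 0"
    by (rule exI[of _ "\<lambda>_. h"], rule exI[of _ "\<lambda>_. k"]) (simp add: a l2norm_def)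
qed

lemma Qpre_int0:
  assumes "(h, k) \<in> Qdot_pre \<Omega> e"
  shows "integrable N (\<lambda>x. cnj (e x) * h x)" "integral\<^sup>L N (\<lambda>x. cnj (e x) * h x) = 0"
  using assms eQ0_int unfolding Qdot_pre_def by (auto simp: sint)

lemma Qdot_sub:
  assumes "(h', k') \<in> Qdot \<Omega> e" "(h, k) \<in> Qdot_pre \<Omega> e"
  shows "(\<lambda>x. h' x - h x, \<lambda>x. k' x - k x) \<in> Qdot \<Omega> e"
proof -
  from assms(1) obtain F H where FH: "\<forall>j. (F j, H j) \<in> Qdot_pre \<Omega> e"
    "(\<lambda>j. l2norm \<Omega> (\<lambda>x. F j x - h' x)) \<longlonglongrightarrow> 0" "(\<lambda>j. l2norm \<Omega> (\<lambda>x. H j x - k' x)) \<longlonglongrightarrow> 0"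
    and L: "h' \<in> L2 \<Omega>" "k' \<in> L2 \<Omega>"
    unfolding Qdot_def graph_closure_def by auto
  have hk: "(h, k) \<in> Q0 \<Omega>" using assms(2) unfolding Qdot_pre_def by auto
  have hL: "h \<in> L2 \<Omega>" "k \<in> L2 \<Omega>" using Q0D[OF hk] by auto
  have pre: "(\<lambda>x. F j x - h x, \<lambda>x. H j x - k x) \<in> Qdot_pre \<Omega> e" for j
  proof -
    have Fj: "(F j, H j) \<in> Q0 \<Omega>" using FH(1) unfolding Qdot_pre_def by auto
    have "integral\<^sup>L N (\<lambda>x. cnj (e x) * (F j x - h x)) =
        integral\<^sup>L N (\<lambda>x. cnj (e x) * F j x - cnj (e x) * h x)" by (simp add: algebra_simps)
    also have "\<dots> = integral\<^sup>L N (\<lambda>x. cnj (e x) * F j x) - integral\<^sup>L N (\<lambda>x. cnj (e x) * h x)"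
      using Qpre_int0[OF FH(1)[rule_format, of j]] Qpre_int0[OF assms(2)] by (intro Bochner_Integration.integral_diff) auto
    also have "\<dots> = 0" using Qpre_int0[OF FH(1)[rule_format, of j]] Qpre_int0[OF assms(2)] by simp
    finally show ?thesis using Q0_diff[OF Fj hk] unfolding Qdot_pre_def by (simp add: sint)
  qed
  have e1: "(\<lambda>x. (F j x - h x) - (h' x - h x)) = (\<lambda>x. F j x - h' x)" for j by (rule ext) simp
  have e2: "(\<lambda>x. (H j x - k x) - (k' x - k x)) = (\<lambda>x. H j x - k' x)" for j by (rule ext) simp
  have ex: "\<exists>F' H'. (\<forall>j. (F' j, H' j) \<in> Qdot_pre \<Omega> e) \<and>
      (\<lambda>j. l2norm \<Omega> (\<lambda>x. F' j x - (h' x - h x))) \<longlonglongrightarrow> 0 \<and>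
      (\<lambda>j. l2norm \<Omega> (\<lambda>x. H' j x - (k' x - k x))) \<longlonglongrightarrow> 0"
    by (rule exI[of _ "\<lambda>j x. F j x - h x"], rule exI[of _ "\<lambda>j x. H j x - k x"]) (use pre FH e1 e2 in simp)
  show ?thesis unfolding Qdot_def graph_closure_def
    using L hL ex by (auto intro!: L2_diff)
qed

end


lemma o_lim:
  fixes f :: "real \<Rightarrow> real"
  assumes "f \<in> o[at_top](\<lambda>R. R powr p)" "p \<le> 0"
  shows "(f \<longlongrightarrow> 0) at_top"
  unfolding tendsto_iff
proof (intro allI impI)
  fix \<epsilon> :: real assume \<epsilon>: "\<epsilon> > 0"
  have "eventually (\<lambda>R. norm (f R) \<le> (\<epsilon>/2) * norm (R powr p)) at_top"
    using landau_o.smallD[OF assms(1), of "\<epsilon>/2"] \<epsilon> by simp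
  then show "eventually (\<lambda>R. dist (f R) 0 < \<epsilon>) at_top"
    using eventually_ge_at_top[of "1::real"]
  proof eventually_elim
    case (elim R)
    have "R powr p \<le> R powr 0" using elim(2) assms(2) by (intro powr_mono) auto
    then have "norm (R powr p) \<le> 1" using elim(2) by simp
    then have "(\<epsilon>/2) * norm (R powr p) \<le> \<epsilon>/2" using \<epsilon> by (simp add: mult_left_le)
    then have "norm (f R) \<le> \<epsilon>/2" using elim(1) by linarith
    then show ?case using \<epsilon> by simp
  qed
qed

context P29 begin

lemma Gdef:
  fixes f :: "real^'n \<Rightarrow> complex"
  shows "(LINT x:(\<Omega> \<inter> cball 0 R)|lebesgue. f x) = integral\<^sup>L N (\<lambda>x. indicator (cball 0 R) x *\<^sub>R f x)"
  unfolding sint[of "\<lambda>x. indicator (cball 0 R) x *\<^sub>R f x", symmetric] set_lebesgue_integral_def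
  by (rule Bochner_Integration.integral_cong) (auto simp: indicator_inter_arith)

lemma cball_int:
  fixes f :: "real^'n \<Rightarrow> complex"
  assumes [measurable]: "f \<in> borel_measurable N" and B: "\<And>x. x \<in> \<Omega> \<Longrightarrow> cmod (f x) \<le> B"
  shows "integrable N (\<lambda>x. indicator (cball 0 R) x *\<^sub>R f x)"
proof (rule Bochner_Integration.integrable_bound[where f="\<lambda>x. (\<bar>B\<bar> * (1 + R^2)^2) * (1 / (1 + (norm x)^2)^2)"])
  show "integrable N (\<lambda>x. (\<bar>B\<bar> * (1 + R^2)^2) * (1 / (1 + (norm x)^2)^2))"
    by (intro Bochner_Integration.integrable_mult_right wN)
  show "(\<lambda>x. indicator (cball 0 R) x *\<^sub>R f x) \<in> borel_measurable N"
    by (intro borel_measurable_scaleR borel_measurable_indicator') (auto simp: closed_cball borel_closed[THEN sets_completionI_sets] sets_restrict_space)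
  show "AE x in N. norm (indicator (cball 0 R) x *\<^sub>R f x) \<le> norm ((\<bar>B\<bar> * (1 + R^2)^2) * (1 / (1 + (norm x)^2)^2))"
  proof (intro AE_I2)
    fix x assume x: "x \<in> space N"
    show "norm (indicator (cball 0 R) x *\<^sub>R f x) \<le> norm ((\<bar>B\<bar> * (1 + R^2)^2) * (1 / (1 + (norm x)^2)^2))"
    proof (cases "x \<in> cball 0 R")
      case True
      then have "norm x \<le> R" by simp
      then have "(norm x)^2 \<le> R^2" by (intro power_mono) auto
      then have q: "(1 + (norm x)^2)^2 \<le> (1 + R^2)^2" by (intro power_mono) auto
      have pos: "(1 + (norm x)^2)^2 > 0" by (intro zero_less_power add_pos_nonneg) auto
      have "cmod (f x) \<le> \<bar>B\<bar>" using B[of x] x by auto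
      also have "\<bar>B\<bar> \<le> \<bar>B\<bar> * ((1 + R^2)^2 / (1 + (norm x)^2)^2)"
        using q pos by (intro mult_le_cancel_left1[THEN iffD2]) (auto simp: le_divide_eq)
      finally show ?thesis using True by simp
    qed simp
  qed
qed

end

locale P29g = P29 +
  fixes d :: "real \<Rightarrow> complex" and g :: "complex \<Rightarrow> complex" and p :: real
  assumes p: "p \<le> 0" and hyp: "\<forall>z. z \<notin> complex_of_real ` {0..} \<longrightarrow>
           (\<lambda>N. cmod ((LINT x:(\<Omega> \<inter> cball 0 N)|lebesgue.
                     complex_of_real ((cmod (e x))^2) / (complex_of_real ((norm x)^2) - z))
                   - d N - g z))
           \<in> o[at_top](\<lambda>N. N powr p)"
begin

definition "G R z = (LINT x:(\<Omega> \<inter> cball 0 R)|lebesgue.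
                     complex_of_real ((cmod (e x))^2) / (complex_of_real ((norm x)^2) - z))"

lemma G_lim:
  assumes "z \<notin> complex_of_real ` {0..}"
  shows "((\<lambda>R. G R z - d R - g z) \<longlongrightarrow> 0) at_top"
proof -
  have "((\<lambda>R. cmod (G R z - d R - g z)) \<longlongrightarrow> 0) at_top"
    using o_lim[OF hyp[rule_format, OF assms] p] unfolding G_def .
  then show ?thesis by (simp add: tendsto_norm_zero_iff)
qed

lemma A_bound:
  assumes z: "z \<notin> complex_of_real ` {0..}"
  obtains C where "C \<ge> 0" "\<And>x. x \<in> \<Omega> \<Longrightarrow> cmod (complex_of_real ((cmod (e x))^2) / (complex_of_real ((norm x)^2) - z)) \<le> C"
proof -
  obtain c where c: "c > 0" "\<forall>s\<ge>0. c * (1 + s) \<le> cmod (complex_of_real s - z)"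
    using offray_bound[OF z] by blast
  have "cmod (complex_of_real ((cmod (e x))^2) / (complex_of_real ((norm x)^2) - z)) \<le> M^2 / c" if x: "x \<in> \<Omega>" for x
  proof -
    have d: "c \<le> cmod (complex_of_real ((norm x)^2) - z)"
      using c(2)[rule_format, of "(norm x)^2"] c(1) by (smt (verit) mult_le_cancel_left1 zero_le_power2)
    have eM: "(cmod (e x))^2 \<le> M^2" using eb x by (intro power_mono) auto
    have "cmod (complex_of_real ((cmod (e x))^2) / (complex_of_real ((norm x)^2) - z)) =
        (cmod (e x))^2 / cmod (complex_of_real ((norm x)^2) - z)" by (simp add: norm_divide norm_power)
    also have "\<dots> \<le> M^2 / cmod (complex_of_real ((norm x)^2) - z)"
      using eM by (intro divide_right_mono) auto
    also have "\<dots> \<le> M^2 / c"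
    proof -
      have dpos: "0 < cmod (complex_of_real ((norm x)^2) - z)" using d c(1) by linarith
      show ?thesis using d dpos c(1) by (intro divide_left_mono mult_pos_pos) auto
    qed
    finally show ?thesis .
  qed
  then show ?thesis using that[of "M^2/c"] c(1) by auto
qed

lemma gdiff:
  assumes l: "l \<notin> complex_of_real ` {0..}" and m: "m \<notin> complex_of_real ` {0..}"
  shows "integrable N (\<lambda>x. cnj (e x) * (psi e l x - psi e m x))"
    and "integral\<^sup>L N (\<lambda>x. cnj (e x) * (psi e l x - psi e m x)) = g l - g m"
proof -
  define F where "F x = cnj (e x) * (psi e l x - psi e m x)" for x
  define A where "A z x = complex_of_real ((cmod (e x))^2) / (complex_of_real ((norm x)^2) - z)" for z x
  have [measurable]: "F \<in> borel_measurable N" unfolding F_def psi_def by measurable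
  have Am[measurable]: "A z \<in> borel_measurable N" for z unfolding A_def by measurable
  have FA: "F x = A l x - A m x" for x
    unfolding F_def A_def psi_def complex_norm_square by (simp add: field_simps)
  obtain cl where cl: "cl > 0" "\<forall>s\<ge>0. cl * (1 + s) \<le> cmod (complex_of_real s - l)"
    using offray_bound[OF l] by blast
  obtain cm where cm: "cm > 0" "\<forall>s\<ge>0. cm * (1 + s) \<le> cmod (complex_of_real s - m)"
    using offray_bound[OF m] by blast
  define C where "C = M^2 * cmod (l - m) / (cl * cm)"
  have Fb: "cmod (F x) \<le> C * (1 / (1 + (norm x)^2)^2)" if x: "x \<in> \<Omega>" for x
  proof -
    define s where "s = (norm x)^2"
    have s0: "s \<ge> 0" unfolding s_def by simp
    have nl: "complex_of_real s - l \<noteq> 0" and nm: "complex_of_real s - m \<noteq> 0"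
      using offray_ne[OF l s0] offray_ne[OF m s0] by auto
    have "F x = complex_of_real ((cmod (e x))^2) * (l - m) / ((complex_of_real s - l) * (complex_of_real s - m))"
      unfolding FA A_def s_def[symmetric] using nl nm by (simp add: field_simps)
    then have "cmod (F x) = (cmod (e x))^2 * cmod (l - m) / (cmod (complex_of_real s - l) * cmod (complex_of_real s - m))"
      by (simp add: norm_divide norm_mult norm_power)
    also have "\<dots> \<le> M^2 * cmod (l - m) / ((cl * (1 + s)) * (cm * (1 + s)))"
    proof (rule frac_le)
      show "0 \<le> M^2 * cmod (l - m)" by simp
      show "(cmod (e x))^2 * cmod (l - m) \<le> M^2 * cmod (l - m)"
        using eb x by (intro mult_right_mono power_mono) auto
      show "0 < cl * (1 + s) * (cm * (1 + s))" using cl cm s0 by (intro mult_pos_pos) auto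
      show "cl * (1 + s) * (cm * (1 + s)) \<le> cmod (complex_of_real s - l) * cmod (complex_of_real s - m)"
        using cl cm s0 by (intro mult_mono) auto
    qed
    also have "\<dots> = C * (1 / (1 + s)^2)" unfolding C_def by (simp add: power2_eq_square field_simps)
    finally show ?thesis unfolding s_def .
  qed
  have C0: "C \<ge> 0" unfolding C_def using cl cm by auto
  have Ci: "integrable N (\<lambda>x. C * (1 / (1 + (norm x)^2)^2))"
    by (intro Bochner_Integration.integrable_mult_right wN)
  have Fi: "integrable N F"
    by (rule Bochner_Integration.integrable_bound[OF Ci]) (use Fb C0 in \<open>auto intro!: AE_I2\<close>)
  then show "integrable N (\<lambda>x. cnj (e x) * (psi e l x - psi e m x))" unfolding F_def .
  define S where "S R = integral\<^sup>L N (\<lambda>x. indicator (cball 0 R) x *\<^sub>R F x)" for R :: real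
  have lim1: "(S \<longlongrightarrow> integral\<^sup>L N F) at_top"
    unfolding S_def
  proof (rule integral_dominated_convergence_at_top[where w="\<lambda>x. C * (1 / (1 + (norm x)^2)^2)"])
    show "F \<in> borel_measurable N" by measurable
    show "(\<lambda>x. indicator (cball 0 R) x *\<^sub>R F x) \<in> borel_measurable N" for R
      by (intro borel_measurable_scaleR borel_measurable_indicator') (auto simp: closed_cball borel_closed[THEN sets_completionI_sets] sets_restrict_space)
    show "integrable N (\<lambda>x. C * (1 / (1 + (norm x)^2)^2))" by (rule Ci)
    show "AE x in N. ((\<lambda>R. indicator (cball 0 R) x *\<^sub>R F x) \<longlongrightarrow> F x) at_top"
    proof (intro AE_I2)
      fix x
      show "((\<lambda>R. indicator (cball 0 R) x *\<^sub>R F x) \<longlongrightarrow> F x) at_top"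
        by (rule tendsto_eventually, rule eventually_mono[OF eventually_ge_at_top[of "norm x"]]) simp
    qed
    show "\<forall>\<^sub>F R in at_top. AE x in N. norm (indicator (cball 0 R) x *\<^sub>R F x) \<le> C * (1 / (1 + (norm x)^2)^2)"
    proof (rule always_eventually, rule allI)
      fix R
      show "AE x in N. norm (indicator (cball 0 R) x *\<^sub>R F x) \<le> C * (1 / (1 + (norm x)^2)^2)"
      proof (rule AE_I2)
        fix x assume "x \<in> space N"
        then have x: "x \<in> \<Omega>" by simp
        have "0 \<le> C * (1 / (1 + (norm x)^2)^2)" using C0 by simp
        then show "norm (indicator (cball 0 R) x *\<^sub>R F x) \<le> C * (1 / (1 + (norm x)^2)^2)"
          using Fb[OF x] by (auto simp: indicator_def)
      qed
    qed
  qed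
  obtain Cl where Cl: "\<And>x. x \<in> \<Omega> \<Longrightarrow> cmod (A l x) \<le> Cl" using A_bound[OF l] unfolding A_def by blast
  obtain Cm where Cm: "\<And>x. x \<in> \<Omega> \<Longrightarrow> cmod (A m x) \<le> Cm" using A_bound[OF m] unfolding A_def by blast
  have SG: "S R = G R l - G R m" for R
  proof -
    have "S R = integral\<^sup>L N (\<lambda>x. indicator (cball 0 R) x *\<^sub>R A l x - indicator (cball 0 R) x *\<^sub>R A m x)"
      unfolding S_def FA by (simp add: scaleR_diff_right)
    also have "\<dots> = integral\<^sup>L N (\<lambda>x. indicator (cball 0 R) x *\<^sub>R A l x) - integral\<^sup>L N (\<lambda>x. indicator (cball 0 R) x *\<^sub>R A m x)"
      by (intro Bochner_Integration.integral_diff cball_int[OF Am Cl] cball_int[OF Am Cm])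
    also have "\<dots> = G R l - G R m" unfolding G_def Gdef A_def ..
    finally show ?thesis .
  qed
  have "((\<lambda>R. (G R l - d R - g l) - (G R m - d R - g m) + (g l - g m)) \<longlongrightarrow> 0 - 0 + (g l - g m)) at_top"
    by (intro tendsto_add tendsto_diff G_lim l m tendsto_const)
  then have lim2: "(S \<longlongrightarrow> g l - g m) at_top" unfolding SG by simp
  show "integral\<^sup>L N (\<lambda>x. cnj (e x) * (psi e l x - psi e m x)) = g l - g m"
    using tendsto_unique[OF trivial_limit_at_top_linorder lim1 lim2] unfolding F_def by simp
qed

end


lemma i_off: "\<i> \<notin> complex_of_real ` {0..}" and mi_off: "- \<i> \<notin> complex_of_real ` {0..}"
  by (auto simp: complex_eq_iff)

lemma psi_mul:
  assumes "l \<notin> complex_of_real ` {0..}"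
  shows "complex_of_real ((norm x)^2) * psi e l x = e x + l * psi e l x"
proof -
  have "complex_of_real ((norm x)^2) - l \<noteq> 0" using offray_ne[OF assms, of "(norm x)^2"] by simp
  then show ?thesis unfolding psi_def by (simp add: field_simps)
qed

context P29g begin

lemma core:
  fixes c t E :: complex
  assumes l: "l \<notin> complex_of_real ` {0..}" and rq: "(r, q) \<in> Q0 \<Omega>"
    and orth: "integral\<^sup>L N (\<lambda>x. cnj (e x) * r x) = c * (g \<i> + E * g (- \<i>) - (1 + E) * g l)"
    and t: "t = c * (1 + E)"
  shows "\<exists>h k. (h, k) \<in> Qdot_pre \<Omega> e \<and>
     (\<forall>x. r x + t * psi e l x = h x + c * (psi e \<i> x + E * psi e (- \<i>) x)) \<and>
     (\<forall>x. l * t * psi e l x + q x = k x + c * (\<i> * psi e \<i> x - \<i> * E * psi e (- \<i>) x))"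
proof -
  note Q = Q0D[OF rq]
  define h where "h = (\<lambda>x. (r x + t * psi e l x) - c * (psi e \<i> x + E * psi e (- \<i>) x))"
  define k where "k = (\<lambda>x. (q x + (l * t) * psi e l x) - c * (\<i> * psi e \<i> x - (\<i> * E) * psi e (- \<i>) x))"
  have pl: "psi e l \<in> L2 \<Omega>" and pi: "psi e \<i> \<in> L2 \<Omega>" and pmi: "psi e (- \<i>) \<in> L2 \<Omega>"
    using psi_L2 l i_off mi_off by auto
  have hL: "h \<in> L2 \<Omega>" unfolding h_def
    by (intro L2_diff L2_add L2_cmult Q(1) pl pi pmi)
  have kL: "k \<in> L2 \<Omega>" unfolding k_def
    by (intro L2_diff L2_add L2_cmult Q(2) pl pi pmi)
  have ae: "AE x in N. k x = complex_of_real ((norm x)^2) * h x"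
    using Q(3)
  proof eventually_elim
    case (elim x)
    let ?s = "complex_of_real ((norm x)^2)"
    have "?s * h x = ?s * r x + t * (?s * psi e l x) - c * (?s * psi e \<i> x + E * (?s * psi e (- \<i>) x))"
      unfolding h_def by (simp add: algebra_simps)
    also have "\<dots> = q x + t * (e x + l * psi e l x) - c * ((e x + \<i> * psi e \<i> x) + E * (e x + (- \<i>) * psi e (- \<i>) x))"
      unfolding psi_mul[OF l] psi_mul[OF i_off] psi_mul[OF mi_off] elim ..
    also have "\<dots> = k x" unfolding k_def t by (simp add: algebra_simps)
    finally show ?case by simp
  qed
  have eh: "cnj (e x) * h x = cnj (e x) * r x + c * (cnj (e x) * (psi e l x - psi e \<i> x))
      + (c * E) * (cnj (e x) * (psi e l x - psi e (- \<i>) x))" for x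
    unfolding h_def t by (simp add: algebra_simps)
  have i1: "integrable N (\<lambda>x. cnj (e x) * r x)" by (rule eQ0_int[OF rq])
  note g1 = gdiff[OF l i_off] and g2 = gdiff[OF l mi_off]
  have "integral\<^sup>L N (\<lambda>x. cnj (e x) * h x) =
      integral\<^sup>L N (\<lambda>x. cnj (e x) * r x + c * (cnj (e x) * (psi e l x - psi e \<i> x))
      + (c * E) * (cnj (e x) * (psi e l x - psi e (- \<i>) x)))" unfolding eh ..
  also have "\<dots> = integral\<^sup>L N (\<lambda>x. cnj (e x) * r x) + c * integral\<^sup>L N (\<lambda>x. cnj (e x) * (psi e l x - psi e \<i> x))
      + (c * E) * integral\<^sup>L N (\<lambda>x. cnj (e x) * (psi e l x - psi e (- \<i>) x))"
    using i1 g1(1) g2(1) by simp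
  also have "\<dots> = 0" unfolding orth g1(2) g2(2) by (simp add: algebra_simps)
  finally have int0: "integral\<^sup>L N (\<lambda>x. cnj (e x) * h x) = 0" .
  have "(h, k) \<in> Qdot_pre \<Omega> e"
    unfolding Qdot_pre_def Q0_def aeq_iff sint using hL kL ae int0 by auto
  moreover have "\<forall>x. r x + t * psi e l x = h x + c * (psi e \<i> x + E * psi e (- \<i>) x)"
    unfolding h_def by simp
  moreover have "\<forall>x. l * t * psi e l x + q x = k x + c * (\<i> * psi e \<i> x - \<i> * E * psi e (- \<i>) x)"
    unfolding k_def by simp
  ultimately show ?thesis by blast
qed

end


lemma key_identity:
  fixes A B gl :: complex and \<theta> :: real
  assumes "0 < \<theta>" "\<theta> < 2*pi" "\<theta> \<noteq> pi"
  shows "1 + exp (\<i> * complex_of_real \<theta>) \<noteq> 0" "cot (\<theta>/2) \<noteq> 0"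
    "A + exp (\<i> * complex_of_real \<theta>) * B - (1 + exp (\<i> * complex_of_real \<theta>)) * gl =
     (1 + exp (\<i> * complex_of_real \<theta>)) * ((A - B) / (2*\<i>) / complex_of_real (cot (\<theta>/2)) + (A + B)/2 - gl)"
proof -
  define u where "u = \<theta>/2"
  have u: "0 < u" "u < pi" "u \<noteq> pi/2" using assms unfolding u_def by auto
  have s: "sin u > 0" using u by (intro sin_gt_zero) auto
  have c: "cos u \<noteq> 0"
  proof
    assume "cos u = 0"
    then obtain n where "u = real_of_int n * pi + pi/2" using cos_zero_iff_int2 by blast
    note n = this
    consider "n = 0" | "n \<ge> 1" | "n \<le> -1" by linarith
    then show False
    proof cases
      case 1 then show False using n u by simp
    next
      case 2
      then have "real_of_int n \<ge> 1" by simp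
      then have "real_of_int n * pi \<ge> 1 * pi" by (intro mult_right_mono) auto
      then show False using n u pi_gt_zero by linarith
    next
      case 3
      then have "real_of_int n \<le> -1" by simp
      then have "real_of_int n * pi \<le> -1 * pi" by (intro mult_right_mono) auto
      then show False using n u pi_gt_zero by linarith
    qed
  qed
  define co where "co = complex_of_real (cos u)"
  define si where "si = complex_of_real (sin u)"
  have co: "co \<noteq> 0" and si: "si \<noteq> 0" using c s unfolding co_def si_def by auto
  have pyth: "co^2 + si^2 = 1" unfolding co_def si_def
    by (metis of_real_add of_real_power of_real_1 sin_cos_squared_add2)
  have E: "exp (\<i> * complex_of_real \<theta>) = (co + \<i> * si)^2"
  proof -
    have "exp (\<i> * complex_of_real \<theta>) = exp (\<i> * complex_of_real u)^2"
      unfolding u_def by (simp add: exp_double[symmetric] algebra_simps flip: exp_of_nat_mult)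
    also have "exp (\<i> * complex_of_real u) = co + \<i> * si"
      unfolding co_def si_def by (simp add: exp_Euler cos_of_real sin_of_real)
    finally show ?thesis .
  qed
  have cot: "complex_of_real (cot (\<theta>/2)) = co / si" unfolding co_def si_def u_def cot_def by simp
  have onepE: "1 + exp (\<i> * complex_of_real \<theta>) = 2 * co * (co + \<i> * si)"
    unfolding E using pyth by (simp add: power2_eq_square algebra_simps)
  show "1 + exp (\<i> * complex_of_real \<theta>) \<noteq> 0"
  proof -
    have "co + \<i> * si \<noteq> 0" using si by (auto simp: co_def si_def complex_eq_iff)
    then show ?thesis unfolding onepE using co by simp
  qed
  show "cot (\<theta>/2) \<noteq> 0" using c s unfolding cot_def u_def by simp
  show "A + exp (\<i> * complex_of_real \<theta>) * B - (1 + exp (\<i> * complex_of_real \<theta>)) * gl =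
     (1 + exp (\<i> * complex_of_real \<theta>)) * ((A - B) / (2*\<i>) / complex_of_real (cot (\<theta>/2)) + (A + B)/2 - gl)"
    unfolding onepE cot unfolding E using co si pyth
    apply (simp add: field_simps)
    apply (simp add: power2_eq_square algebra_simps)
    using pyth by algebra
qed


lemma cnj_off: "l \<notin> complex_of_real ` {0..} \<Longrightarrow> cnj l \<notin> complex_of_real ` {0..}"
proof
  assume l: "l \<notin> complex_of_real ` {0..}" and "cnj l \<in> complex_of_real ` {0..}"
  then obtain s where "s \<ge> 0" "cnj l = complex_of_real s" by auto
  then have "l = complex_of_real s" by (metis complex_cnj_cnj complex_cnj_complex_of_real)
  then show False using l \<open>s \<ge> 0\<close> by auto
qed

context P29g begin

lemma e0_I:
  assumes "AE x in N. e x = 0"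
  shows "(LINT y:\<Omega>|lebesgue. cnj (e y) * (\<phi> y / (l - complex_of_real ((norm y)^2)))) = 0"
  unfolding sint by (rule integral_eq_zero_AE) (use assms in eventually_elim, simp)

lemma e0_psi:
  assumes l: "l \<notin> complex_of_real ` {0..}" and "AE x in N. psi e l x = 0"
  shows "AE x in N. e x = 0"
  using assms(2)
proof eventually_elim
  case (elim x)
  have "complex_of_real ((norm x)^2) - l \<noteq> 0" using offray_ne[OF l, of "(norm x)^2"] by simp
  then show ?case using elim unfolding psi_def by simp
qed

lemma e0_K:
  assumes "g \<i> - g (- \<i>) = 0"
  shows "AE x in N. e x = 0"
proof -
  define u where "u x = 2 * (cmod (e x))^2 / ((norm x)^4 + 1)" for x
  define F where "F x = cnj (e x) * (psi e \<i> x - psi e (- \<i>) x)" for x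
  have Fu: "F x = \<i> * complex_of_real (u x)" for x
  proof -
    define s where "s = (norm x)^2"
    have n1: "complex_of_real s - \<i> \<noteq> 0" "complex_of_real s + \<i> \<noteq> 0"
      by (auto simp: complex_eq_iff)
    have n2: "(norm x)^4 + 1 \<noteq> 0" by (metis add_nonneg_pos zero_le_power_eq_numeral zero_less_one norm_ge_zero less_irrefl zero_le_power)
    have s4: "(norm x)^4 = s^2" unfolding s_def by simp
    have "F x = complex_of_real ((cmod (e x))^2) * (2 * \<i>) / ((complex_of_real s - \<i>) * (complex_of_real s + \<i>))"
      unfolding F_def psi_def s_def[symmetric] complex_norm_square using n1
      by (simp add: field_simps)
    also have "(complex_of_real s - \<i>) * (complex_of_real s + \<i>) = complex_of_real (s^2 + 1)"
      by (simp add: algebra_simps power2_eq_square)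
    finally show ?thesis unfolding u_def s4 using n2[unfolded s4]
      by (simp add: field_simps)
  qed
  note g = gdiff[OF i_off mi_off]
  have Fi: "integrable N F" using g(1) unfolding F_def .
  have ui: "integrable N u"
  proof -
    have "integrable N (\<lambda>x. Re (- \<i> * F x))"
      by (rule integrable_bounded_linear[OF bounded_linear_Re]) (use Fi in simp)
    then show ?thesis unfolding Fu by simp
  qed
  have "integral\<^sup>L N F = \<i> * complex_of_real (integral\<^sup>L N u)" unfolding Fu by simp
  then have "integral\<^sup>L N u = 0" using g(2) assms unfolding F_def by simp
  moreover have "AE x in N. 0 \<le> u x" unfolding u_def by (intro AE_I2) (simp add: add_nonneg_pos)
  ultimately have "AE x in N. u x = 0" using integral_nonneg_eq_0_iff_AE[OF ui] by blast
  then show ?thesis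
  proof eventually_elim
    case (elim x)
    have "(norm x)^4 + 1 > 0" by (simp add: add_nonneg_pos)
    then show ?case using elim unfolding u_def by simp
  qed
qed

end


context P29g begin

lemma main:
  fixes \<theta> \<alpha> :: real and a b l :: complex and Ra R0
  assumes ab: "a = (g \<i> - g (- \<i>)) / (2 * \<i>)" "b = (g \<i> + g (- \<i>)) / 2"
    and th: "0 < \<theta>" "\<theta> < 2 * pi" and al: "\<alpha> = cot (\<theta> / 2)"
    and l: "l \<notin> complex_of_real ` {0..}"
    and Ra: "is_resolvent \<Omega> (Qalpha \<Omega> e \<theta>) l Ra"
    and R0: "is_resolvent \<Omega> (Q0 \<Omega>) l R0"
  shows "(\<forall>\<phi> \<in> L2 \<Omega>. aeq \<Omega> (Ra \<phi>)
            (\<lambda>x. R0 \<phi> x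
                 + (if \<alpha> = 0 then 0 else 1 / (a / complex_of_real \<alpha> + b - g l))
                   * (LINT y:\<Omega>|lebesgue. cnj (e y) * (\<phi> y / (l - complex_of_real ((norm y)^2))))
                   * psi e l x))
         \<and> trace_class \<Omega> (\<lambda>\<phi> x. Ra \<phi> x - R0 \<phi> x)"
proof -
  define E where "E = exp (\<i> * complex_of_real \<theta>)"
  define K where "K = g \<i> + E * g (- \<i>) - (1 + E) * g l"
  define Cf where "Cf = (if \<alpha> = 0 then 0 else 1 / (a / complex_of_real \<alpha> + b - g l))"
  define I where "I \<phi> = (LINT y:\<Omega>|lebesgue. cnj (e y) * (\<phi> y / (l - complex_of_real ((norm y)^2))))" for \<phi>
  define W1 where "W1 x = psi e \<i> x + E * psi e (- \<i>) x" for x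
  define W2 where "W2 x = \<i> * psi e \<i> x - \<i> * E * psi e (- \<i>) x" for x
  have inj: "\<And>f G. (f, G) \<in> Qalpha \<Omega> e \<theta> \<Longrightarrow> aeq \<Omega> (\<lambda>x. l * f x - G x) (\<lambda>x. 0) \<Longrightarrow> aeq \<Omega> f (\<lambda>x. 0)"
    using Ra unfolding is_resolvent_def by blast
  have toQ: "(f, G) \<in> Qalpha \<Omega> e \<theta>"
    if "(h, k) \<in> Qdot \<Omega> e" "AE x in N. f x = h x + c * W1 x" "AE x in N. G x = k x + c * W2 x"
      "f \<in> L2 \<Omega>" "G \<in> L2 \<Omega>" for f G h k c
    unfolding Qalpha_def using that unfolding aeq_iff W1_def W2_def E_def by blast
  have pl: "psi e l \<in> L2 \<Omega>" by (rule psi_L2[OF l])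
  have eig: "AE x in N. e x = 0" if K0: "K = 0" and E1: "1 + E \<noteq> 0"
  proof -
    have z: "((\<lambda>x. 0), (\<lambda>x. 0)) \<in> Q0 \<Omega>" unfolding Q0_def aeq_iff using L2_zero by simp
    obtain h k where hk: "(h, k) \<in> Qdot_pre \<Omega> e"
      "\<forall>x. 0 + 1 * psi e l x = h x + (1 / (1 + E)) * W1 x"
      "\<forall>x. l * 1 * psi e l x + 0 = k x + (1 / (1 + E)) * W2 x"
      using core[OF l z, of "1 / (1 + E)" E 1] K0 E1 unfolding K_def W1_def W2_def by auto
    have h2: "psi e l x = h x + 1 / (1 + E) * W1 x" for x using hk(2) by simp
    have h3: "l * psi e l x = k x + 1 / (1 + E) * W2 x" for x using hk(3) by simp
    have "(psi e l, \<lambda>x. l * psi e l x) \<in> Qalpha \<Omega> e \<theta>"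
      by (rule toQ[of h k _ "1 / (1 + E)", OF Qpre_Qdot[OF hk(1)]])
        (intro AE_I2 h2, intro AE_I2 h3, rule pl, rule L2_cmult[OF pl])
    then have "aeq \<Omega> (psi e l) (\<lambda>x. 0)" by (rule inj) (simp add: aeq_def)
    then show ?thesis using e0_psi[OF l] unfolding aeq_iff by blast
  qed
  have choose: "\<exists>c t. J = c * K \<and> t = c * (1 + E) \<and> t = Cf * J'" if JJ: "(AE x in N. e x = 0) \<Longrightarrow> J = 0 \<and> J' = 0" "J = J'" for J J'
  proof (cases "\<theta> = pi")
    case True
    have E: "E = -1" unfolding E_def True by (simp add: exp_pi_i')
    have a0: "\<alpha> = 0" unfolding al True by (simp add: cot_def)
    have KK: "K = g \<i> - g (- \<i>)" unfolding K_def E by simp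
    show ?thesis
    proof (cases "K = 0")
      case True
      then have "J = 0" using JJ e0_K KK by auto
      then show ?thesis using E a0 unfolding Cf_def by (intro exI[of _ 0]) auto
    next
      case False
      then show ?thesis using E a0 unfolding Cf_def by (intro exI[of _ "J / K"] exI[of _ 0]) auto
    qed
  next
    case False
    note ki = key_identity(1)[OF th False] key_identity(2)[OF th False]
      key_identity(3)[OF th False, of "g \<i>" "g (- \<i>)" "g l"]
    have E1: "1 + E \<noteq> 0" using ki(1) unfolding E_def .
    have a0: "\<alpha> \<noteq> 0" using ki(2) unfolding al .
    define D0 where "D0 = a / complex_of_real \<alpha> + b - g l"
    have KD: "K = (1 + E) * D0" unfolding K_def D0_def ab al E_def using ki(3) by simp
    show ?thesis
    proof (cases "D0 = 0")
      case True
      then have "J = 0" "J' = 0" using JJ(1) eig KD E1 by auto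
      then show ?thesis by (intro exI[of _ 0]) auto
    next
      case False
      have Cf: "Cf = 1 / D0" unfolding Cf_def D0_def using a0 by simp
      have "D0 * (1 + E) \<noteq> 0" using False E1 by simp
      then have nz: "D0 + D0 * E \<noteq> 0" by (simp add: algebra_simps)
      show ?thesis
        by (rule exI[of _ "J / ((1 + E) * D0)"], rule exI[of _ "J / D0"])
           (use False E1 KD Cf JJ(2) nz in \<open>simp add: field_simps\<close>)
    qed
  qed
  have formula: "AE x in N. Ra \<phi> x = R0 \<phi> x + Cf * I \<phi> * psi e l x" if phi: "\<phi> \<in> L2 \<Omega>" for \<phi>
  proof -
    have R0L: "R0 \<phi> \<in> L2 \<Omega>" and R0Q: "(R0 \<phi>, \<lambda>x. l * R0 \<phi> x - \<phi> x) \<in> Q0 \<Omega>"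
      using R0 phi unfolding is_resolvent_def by auto
    have [measurable]: "\<phi> \<in> borel_measurable N" "R0 \<phi> \<in> borel_measurable N"
      using phi R0L by (auto intro: L2_meas)
    have R0eq: "AE x in N. R0 \<phi> x = \<phi> x / (l - complex_of_real ((norm x)^2))"
      using Q0D(3)[OF R0Q]
    proof eventually_elim
      case (elim x)
      have "l - complex_of_real ((norm x)^2) \<noteq> 0" using offray_ne[OF l, of "(norm x)^2"] by auto
      then show ?case using elim by (simp add: field_simps)
    qed
    have R0int: "integral\<^sup>L N (\<lambda>x. cnj (e x) * R0 \<phi> x) = I \<phi>"
      unfolding I_def sint
      by (rule integral_cong_AE) (measurable, use R0eq in eventually_elim, simp)
    have IJ: "(AE x in N. e x = 0) \<Longrightarrow> integral\<^sup>L N (\<lambda>x. cnj (e x) * R0 \<phi> x) = 0 \<and> I \<phi> = 0"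
      using e0_I R0int unfolding I_def by auto
    obtain c t where ct: "integral\<^sup>L N (\<lambda>x. cnj (e x) * R0 \<phi> x) = c * K" "t = c * (1 + E)" "t = Cf * I \<phi>"
      using choose[OF IJ R0int] by blast
    obtain h k where hk: "(h, k) \<in> Qdot_pre \<Omega> e"
      "\<forall>x. R0 \<phi> x + t * psi e l x = h x + c * W1 x"
      "\<forall>x. l * t * psi e l x + (l * R0 \<phi> x - \<phi> x) = k x + c * W2 x"
      using core[OF l R0Q ct(1)[unfolded K_def] ct(2)] unfolding W1_def W2_def by blast
    define f where "f x = R0 \<phi> x + t * psi e l x" for x
    have fL: "f \<in> L2 \<Omega>" unfolding f_def by (intro L2_add L2_cmult R0L pl)
    have RaL: "Ra \<phi> \<in> L2 \<Omega>" and RaQ: "(Ra \<phi>, \<lambda>x. l * Ra \<phi> x - \<phi> x) \<in> Qalpha \<Omega> e \<theta>"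
      using Ra phi unfolding is_resolvent_def by auto
    obtain h' k' c' where h'k': "(h', k') \<in> Qdot \<Omega> e"
      "AE x in N. Ra \<phi> x = h' x + c' * W1 x"
      "AE x in N. l * Ra \<phi> x - \<phi> x = k' x + c' * W2 x"
      using RaQ unfolding Qalpha_def aeq_iff W1_def W2_def E_def by blast
    define D where "D x = Ra \<phi> x - f x" for x
    have DL: "D \<in> L2 \<Omega>" unfolding D_def by (intro L2_diff RaL fL)
    have "(D, \<lambda>x. l * D x) \<in> Qalpha \<Omega> e \<theta>"
    proof (rule toQ[OF Qdot_sub[OF h'k'(1) hk(1)]])
      show "AE x in N. D x = h' x - h x + (c' - c) * W1 x"
        using h'k'(2)
      proof eventually_elim
        case (elim x)
        have "f x = h x + c * W1 x" using hk(2) unfolding f_def by auto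
        then show ?case unfolding D_def elim by (simp add: algebra_simps)
      qed
      show "AE x in N. l * D x = k' x - k x + (c' - c) * W2 x"
        using h'k'(3)
      proof eventually_elim
        case (elim x)
        have "l * D x = (l * Ra \<phi> x - \<phi> x) - (l * t * psi e l x + (l * R0 \<phi> x - \<phi> x))"
          unfolding D_def f_def by (simp add: algebra_simps)
        also have "\<dots> = (k' x + c' * W2 x) - (k x + c * W2 x)" unfolding elim using hk(3) by simp
        finally show ?case by (simp add: algebra_simps)
      qed
      show "D \<in> L2 \<Omega>" by (rule DL)
      show "(\<lambda>x. l * D x) \<in> L2 \<Omega>" by (rule L2_cmult[OF DL])
    qed
    then have "aeq \<Omega> D (\<lambda>x. 0)" by (rule inj) (simp add: aeq_def)
    then show ?thesis unfolding aeq_iff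
    proof eventually_elim
      case (elim x)
      then show ?case unfolding D_def f_def ct(3) by simp
    qed
  qed
  have part1: "\<forall>\<phi> \<in> L2 \<Omega>. aeq \<Omega> (Ra \<phi>) (\<lambda>x. R0 \<phi> x + Cf * I \<phi> * psi e l x)"
    using formula unfolding aeq_iff by blast
  define v0 where "v0 x = e x / (cnj l - complex_of_real ((norm x)^2))" for x
  define u where "u k = (if k = 0 then (\<lambda>x. Cf * psi e l x) else (\<lambda>x. 0))" for k :: nat
  define v where "v k = (if k = 0 then v0 else (\<lambda>x. 0))" for k :: nat
  have v0L: "v0 \<in> L2 \<Omega>"
  proof -
    have veq: "v0 x = (-1) * psi e (cnj l) x" for x
    proof -
      have "complex_of_real ((norm x)^2) - cnj l \<noteq> 0" using offray_ne[OF cnj_off[OF l], of "(norm x)^2"] by auto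
      then show ?thesis unfolding v0_def psi_def by (simp add: field_simps)
    qed
    have "v0 = (\<lambda>x. (-1) * psi e (cnj l) x)" using veq by (intro ext)
    then show ?thesis using L2_cmult[OF psi_L2[OF cnj_off[OF l]], of "-1"] by simp
  qed
  have uvL: "\<forall>k. u k \<in> L2 \<Omega> \<and> v k \<in> L2 \<Omega>"
    unfolding u_def v_def using L2_cmult[OF pl] v0L L2_zero by auto
  have l2z: "l2norm \<Omega> (\<lambda>x. 0) = 0" unfolding l2norm_def by simp
  have summ: "summable (\<lambda>k. l2norm \<Omega> (u k) * l2norm \<Omega> (v k))"
  proof -
    have "(\<lambda>k. l2norm \<Omega> (u k) * l2norm \<Omega> (v k)) = (\<lambda>k. if k = 0 then l2norm \<Omega> (u 0) * l2norm \<Omega> (v 0) else 0)"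
      unfolding u_def v_def using l2z by auto
    then show ?thesis using sums_summable[OF sums_single[of 0 "\<lambda>_. l2norm \<Omega> (u 0) * l2norm \<Omega> (v 0)"]] by simp
  qed
  have conv: "(\<lambda>m. l2norm \<Omega> (\<lambda>x. (Ra \<phi> x - R0 \<phi> x) - (\<Sum>k<m. l2inner \<Omega> \<phi> (v k) * u k x))) \<longlonglongrightarrow> 0"
    if phi: "\<phi> \<in> L2 \<Omega>" for \<phi>
  proof (rule tendsto_eventually, rule eventually_sequentiallyI[of 1])
    fix m :: nat assume m: "1 \<le> m"
    have inner: "l2inner \<Omega> \<phi> v0 = I \<phi>"
      unfolding l2inner_def I_def v0_def
      by (rule arg_cong[where f="\<lambda>f. set_lebesgue_integral lebesgue \<Omega> f"], rule ext) (simp add: field_simps)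
    have sm: "(\<Sum>k<m. l2inner \<Omega> \<phi> (v k) * u k x) = I \<phi> * (Cf * psi e l x)" for x
    proof -
      obtain m' where m': "m = Suc m'" using m by (cases m) auto
      show ?thesis unfolding m' sum.lessThan_Suc_shift using inner unfolding u_def v_def by simp
    qed
    have "AE x in N. (Ra \<phi> x - R0 \<phi> x) - (\<Sum>k<m. l2inner \<Omega> \<phi> (v k) * u k x) = 0"
      using formula[OF phi] by eventually_elim (simp add: sm)
    then have "(LINT x:\<Omega>|lebesgue. (cmod ((Ra \<phi> x - R0 \<phi> x) - (\<Sum>k<m. l2inner \<Omega> \<phi> (v k) * u k x)))^2) = 0"
      unfolding sint by (intro integral_eq_zero_AE) (auto elim: eventually_mono)
    then show "l2norm \<Omega> (\<lambda>x. (Ra \<phi> x - R0 \<phi> x) - (\<Sum>k<m. l2inner \<Omega> \<phi> (v k) * u k x)) = 0"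
      unfolding l2norm_def by simp
  qed
  have "trace_class \<Omega> (\<lambda>\<phi> x. Ra \<phi> x - R0 \<phi> x)"
    unfolding trace_class_def using uvL summ conv by blast
  then show ?thesis using part1 unfolding Cf_def I_def by simp
qed

end


theorem proposition2p9:
  fixes \<Omega> :: "(real^'n) set" and e :: "real^'n \<Rightarrow> complex"
    and d :: "real \<Rightarrow> complex" and g :: "complex \<Rightarrow> complex"
    and \<theta> \<alpha> :: real and a b l :: complex
    and Ra R0 :: "(real^'n \<Rightarrow> complex) \<Rightarrow> (real^'n \<Rightarrow> complex)"
  assumes "CARD('n) \<in> {1, 2, 3}"
    and "\<Omega> \<in> sets lebesgue" and "\<not> bounded \<Omega>"
    and "set_borel_measurable lebesgue \<Omega> e" and "\<exists>M. \<forall>x\<in>\<Omega>. cmod (e x) \<le> M"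
    and "\<forall>z. z \<notin> complex_of_real ` {0..} \<longrightarrow>
           (\<lambda>N. cmod ((LINT x:(\<Omega> \<inter> cball 0 N)|lebesgue.
                     complex_of_real ((cmod (e x))^2) / (complex_of_real ((norm x)^2) - z))
                   - d N - g z))
           \<in> o[at_top](\<lambda>N. N powr (real (CARD('n) div 2) - 1))"
    and "a = (g \<i> - g (- \<i>)) / (2 * \<i>)" and "b = (g \<i> + g (- \<i>)) / 2"
    and "0 < \<theta>" and "\<theta> < 2 * pi" and "\<alpha> = cot (\<theta> / 2)"
    and "l \<notin> complex_of_real ` {0..}"
    and "is_resolvent \<Omega> (Qalpha \<Omega> e \<theta>) l Ra"
    and "is_resolvent \<Omega> (Q0 \<Omega>) l R0"
  shows "(\<forall>\<phi> \<in> L2 \<Omega>. aeq \<Omega> (Ra \<phi>)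
            (\<lambda>x. R0 \<phi> x
                 + (if \<alpha> = 0 then 0 else 1 / (a / complex_of_real \<alpha> + b - g l))
                   * (LINT y:\<Omega>|lebesgue. cnj (e y) * (\<phi> y / (l - complex_of_real ((norm y)^2))))
                   * psi e l x))
         \<and> trace_class \<Omega> (\<lambda>\<phi> x. Ra \<phi> x - R0 \<phi> x)"
  proof -
  obtain M where M: "\<forall>x\<in>\<Omega>. cmod (e x) \<le> M" using assms(5) by blast
  have card: "CARD('n) \<le> 3" using assms(1) by auto
  then have "CARD('n) div 2 \<le> 1" by linarith
  then have p: "real (CARD('n) div 2) - 1 \<le> 0" by simp
  interpret P29g \<Omega> e M d g "real (CARD('n) div 2) - 1"
    by unfold_locales (use card assms(2) assms(4) M p assms(6) in auto)
  show ?thesis by (rule main[OF assms(7-14)])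
qed

end
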